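(* For the additive noise model with $N$ items and $K$ defectives and the random Bernoulli$(1/K)$ design, in the regime $N,K\to\infty$ with $K=o(N)$, a necessary condition on the number of tests is $$T=\Omega\!\left(\frac{K\log\frac{N}{K}}{2(1-q)+\ln\frac{1}{q}}\right),$$ where $q$ is the parameter of the Bernoulli noise; namely, if $T=o\!\left(\frac{K\log\frac{N}{K}}{2(1-q)+\ln\frac1q}\right)$ then the error probability approaches $1$.
   Context: Design: $N\times T$ binary matrix with i.i.d. Bernoulli$(1/K)$ entries, $X_j(t)=1$ iff item $j$ is in test $t$. Additive noise model: for defective set $S$ ($|S|=K$, uniformly distributed among $K$-subsets), $Y(t)=\left(\bigvee_{j\in S}X_j(t)\right)\vee W(t)$ with $W(t)$ i.i.d. Bernoulli$(q)$, $q\in(0,1)$, independent of the design. The error probability is that of any decoder estimating $S$ from the outcomes $Y^T$ and the design. *)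

theory Defs
  imports "HOL-Analysis.Analysis" "HOL-Library.Landau_Symbols"
begin

text \<open>A test design is a boolean matrix X j t (item j in test t), with support in
  items j < N and tests t < T.\<close>

type_synonym design = "nat \<Rightarrow> nat \<Rightarrow> bool"
type_synonym outcome = "nat \<Rightarrow> bool"

definition designs :: "nat \<Rightarrow> nat \<Rightarrow> design set" where
  "designs N T = {X. \<forall>j t. X j t \<longrightarrow> j < N \<and> t < T}"

definition noises :: "nat \<Rightarrow> outcome set" where
  "noises T = {W. \<forall>t. W t \<longrightarrow> t < T}"

definition defective_sets :: "nat \<Rightarrow> nat \<Rightarrow> nat set set" where
  "defective_sets N K = {S. S \<subseteq> {..<N} \<and> card S = K}"

definition design_prob :: "nat \<Rightarrow> nat \<Rightarrow> nat \<Rightarrow> design \<Rightarrow> real" where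
  "design_prob N K T X =
     (\<Prod>j<N. \<Prod>t<T. if X j t then 1 / real K else 1 - 1 / real K)"

definition noise_prob :: "nat \<Rightarrow> real \<Rightarrow> outcome \<Rightarrow> real" where
  "noise_prob T q W = (\<Prod>t<T. if W t then q else 1 - q)"

definition outcomes :: "nat \<Rightarrow> nat set \<Rightarrow> design \<Rightarrow> outcome \<Rightarrow> outcome" where
  "outcomes T S X W = (\<lambda>t. t < T \<and> ((\<exists>j\<in>S. X j t) \<or> W t))"

definition success_prob ::
  "nat \<Rightarrow> nat \<Rightarrow> nat \<Rightarrow> real \<Rightarrow> (design \<Rightarrow> outcome \<Rightarrow> nat set) \<Rightarrow> real" where
  "success_prob N K T q dec =
     (\<Sum>S\<in>defective_sets N K. \<Sum>X\<in>designs N T. \<Sum>W\<in>noises T.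
        (1 / real (N choose K)) * design_prob N K T X * noise_prob T q W *
        (if dec X (outcomes T S X W) = S then 1 else 0))"

definition error_prob ::
  "nat \<Rightarrow> nat \<Rightarrow> nat \<Rightarrow> real \<Rightarrow> (design \<Rightarrow> outcome \<Rightarrow> nat set) \<Rightarrow> real" where
  "error_prob N K T q dec = 1 - success_prob N K T q dec"

end

theory Submission
  imports Defs
begin

lemma boolfun_eq: "{g::'a\<Rightarrow>bool. \<forall>i. g i \<longrightarrow> i \<in> I} = (\<lambda>A i. i \<in> A) ` Pow I"
proof (rule set_eqI, rule iffI)
  fix g :: "'a \<Rightarrow> bool" assume "g \<in> {g. \<forall>i. g i \<longrightarrow> i \<in> I}"
  then have "{i. g i} \<in> Pow I" "g = (\<lambda>i. i \<in> {i. g i})" by auto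
  then show "g \<in> (\<lambda>A i. i \<in> A) ` Pow I" by blast
qed auto

lemma boolfun_finite: "finite I \<Longrightarrow> finite {g::'a\<Rightarrow>bool. \<forall>i. g i \<longrightarrow> i \<in> I}"
  unfolding boolfun_eq by simp

lemma boolfun_card: "finite I \<Longrightarrow> card {g::'a\<Rightarrow>bool. \<forall>i. g i \<longrightarrow> i \<in> I} \<le> 2 ^ card I"
  unfolding boolfun_eq by (metis card_Pow card_image_le finite_Pow_iff)

lemma boolfun_sum:
  fixes h :: "'a \<Rightarrow> bool \<Rightarrow> real"
  assumes "finite I"
  shows "(\<Sum>g\<in>{g. \<forall>i. g i \<longrightarrow> i \<in> I}. \<Prod>i\<in>I. h i (g i)) = (\<Prod>i\<in>I. h i True + h i False)"
  using assms
proof (induction I rule: finite_induct)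
  case empty
  have "{g::'a\<Rightarrow>bool. \<forall>i. g i \<longrightarrow> i \<in> {}} = {\<lambda>_. False}" by auto
  then show ?case by simp
next
  case (insert x I)
  let ?S = "{g::'a\<Rightarrow>bool. \<forall>i. g i \<longrightarrow> i \<in> I}"
  let ?S' = "{g::'a\<Rightarrow>bool. \<forall>i. g i \<longrightarrow> i \<in> insert x I}"
  let ?u = "\<lambda>g. g(x:=True)"
  have fin: "finite ?S" by (rule boolfun_finite[OF insert(1)])
  have eq: "?S' = ?S \<union> ?u ` ?S"
  proof (rule set_eqI, rule iffI)
    fix g assume g: "g \<in> ?S'"
    show "g \<in> ?S \<union> ?u ` ?S"
    proof (cases "g x")
      case True
      have A: "g = ?u (g(x:=False))" using True by (simp add: fun_eq_iff)
      have B: "g(x:=False) \<in> ?S" using g by auto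
      have "g \<in> ?u ` ?S" by (rule image_eqI[where f = ?u, OF A B])
      then show ?thesis by (rule UnI2)
    next
      case False then show ?thesis using g by auto
    qed
  next
    fix g assume "g \<in> ?S \<union> ?u ` ?S"
    then show "g \<in> ?S'" by (auto split: if_splits)
  qed
  have disj: "?S \<inter> ?u ` ?S = {}" using insert(2) by auto
  have inj: "inj_on ?u ?S"
  proof (rule inj_onI)
    fix g g' assume g: "g \<in> ?S" and g': "g' \<in> ?S" and e: "?u g = ?u g'"
    show "g = g'"
    proof
      fix i show "g i = g' i"
      proof (cases "i = x")
        case True then show ?thesis using g g' insert(2) by auto
      next
        case False then show ?thesis using fun_cong[OF e, of i] by simp
      qed
    qed
  qed
  have p1: "(\<Prod>i\<in>insert x I. h i (g i)) = h x False * (\<Prod>i\<in>I. h i (g i))" if "g \<in> ?S" for g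
  proof -
    have "\<not> g x" using that insert(2) by auto
    then show ?thesis using insert(1,2) by simp
  qed
  have p2: "(\<Prod>i\<in>insert x I. h i (?u g i)) = h x True * (\<Prod>i\<in>I. h i (g i))" if "g \<in> ?S" for g
  proof -
    have "(\<Prod>i\<in>I. h i (?u g i)) = (\<Prod>i\<in>I. h i (g i))"
      using insert(2) by (intro prod.cong) auto
    then show ?thesis using insert by simp
  qed
  have "(\<Sum>g\<in>?S'. \<Prod>i\<in>insert x I. h i (g i)) =
     (\<Sum>g\<in>?S. \<Prod>i\<in>insert x I. h i (g i)) + (\<Sum>g\<in>?u ` ?S. \<Prod>i\<in>insert x I. h i (g i))"
    unfolding eq using fin disj by (intro sum.union_disjoint) auto
  also have "(\<Sum>g\<in>?u ` ?S. \<Prod>i\<in>insert x I. h i (g i)) = (\<Sum>g\<in>?S. \<Prod>i\<in>insert x I. h i (?u g i))"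
    using inj by (simp add: sum.reindex)
  also have "\<dots> = (\<Sum>g\<in>?S. h x True * (\<Prod>i\<in>I. h i (g i)))" using p2 by (intro sum.cong) auto
  also have "(\<Sum>g\<in>?S. \<Prod>i\<in>insert x I. h i (g i)) = (\<Sum>g\<in>?S. h x False * (\<Prod>i\<in>I. h i (g i)))"
    using p1 by (intro sum.cong) auto
  finally have "(\<Sum>g\<in>?S'. \<Prod>i\<in>insert x I. h i (g i)) =
     h x False * (\<Sum>g\<in>?S. \<Prod>i\<in>I. h i (g i)) + h x True * (\<Sum>g\<in>?S. \<Prod>i\<in>I. h i (g i))"
    by (simp only: sum_distrib_left)
  also have "\<dots> = (h x True + h x False) * (\<Prod>i\<in>I. h i True + h i False)"
    using insert.IH by (simp add: distrib_right)
  also have "\<dots> = (\<Prod>i\<in>insert x I. h i True + h i False)" using insert(1,2) by simp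
  finally show ?case .
qed

lemma noise_sum: "0 < q \<Longrightarrow> q < 1 \<Longrightarrow> (\<Sum>W\<in>noises T. noise_prob T q W) = 1"
  unfolding noises_def noise_prob_def
  using boolfun_sum[of "{..<T}" "\<lambda>t b. if b then q else 1 - q"] by simp

lemma design_sum: "(\<Sum>X\<in>designs N T. design_prob N K T X) = 1"
proof -
  let ?I = "{..<N} \<times> {..<T}"
  let ?f = "\<lambda>b. if b then 1 / real K else 1 - 1 / real K"
  let ?G = "{g::nat\<times>nat\<Rightarrow>bool. \<forall>i. g i \<longrightarrow> i \<in> ?I}"
  have D: "designs N T = curry ` ?G"
  proof (rule set_eqI, rule iffI)
    fix X assume "X \<in> designs N T"
    then have "case_prod X \<in> ?G" "X = curry (case_prod X)" by (auto simp: designs_def)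
    then show "X \<in> curry ` ?G" by blast
  qed (auto simp: designs_def curry_def)
  have inj: "inj_on curry ?G" proof (rule inj_onI)
    fix f g :: "nat\<times>nat\<Rightarrow>bool" assume "curry f = curry g"
    then have "case_prod (curry f) = case_prod (curry g)" by simp
    then show "f = g" by simp
  qed
  have "(\<Sum>X\<in>designs N T. design_prob N K T X) = (\<Sum>g\<in>?G. design_prob N K T (curry g))"
    unfolding D using inj by (simp add: sum.reindex)
  also have "\<dots> = (\<Sum>g\<in>?G. \<Prod>p\<in>?I. ?f (g p))"
    by (intro sum.cong refl) (simp add: design_prob_def prod.cartesian_product case_prod_beta curry_def)
  also have "\<dots> = 1" using boolfun_sum[of ?I "\<lambda>_. ?f"] by simp
  finally show ?thesis .
qed

lemma ds_finite: "finite (defective_sets N K)"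
  unfolding defective_sets_def by (rule finite_subset[of _ "Pow {..<N}"]) auto

lemma card_good: "card {S \<in> defective_sets N K. dec X (outcomes T S X W) = S} \<le> 2 ^ T"
proof -
  let ?A = "{S \<in> defective_sets N K. dec X (outcomes T S X W) = S}"
  have "inj_on (\<lambda>S. outcomes T S X W) ?A"
  proof (rule inj_onI)
    fix S S' assume S: "S \<in> ?A" and S': "S' \<in> ?A" and e: "outcomes T S X W = outcomes T S' X W"
    have "S = dec X (outcomes T S X W)" using S by simp
    also have "\<dots> = dec X (outcomes T S' X W)" using e by simp
    also have "\<dots> = S'" using S' by simp
    finally show "S = S'" .
  qed
  moreover have "(\<lambda>S. outcomes T S X W) ` ?A \<subseteq> noises T" by (auto simp: noises_def outcomes_def)
  moreover have "finite (noises T)" unfolding noises_def using boolfun_finite[of "{..<T}"] by simp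
  ultimately have "card ?A \<le> card (noises T)" by (rule card_inj_on_le)
  also have "\<dots> \<le> 2 ^ T" unfolding noises_def using boolfun_card[of "{..<T}"] by simp
  finally show ?thesis .
qed

lemma dp_nonneg: "K \<ge> 1 \<Longrightarrow> design_prob N K T X \<ge> 0"
  unfolding design_prob_def by (intro prod_nonneg) (auto simp: field_simps)

lemma np_nonneg: "0 < q \<Longrightarrow> q < 1 \<Longrightarrow> noise_prob T q W \<ge> 0"
  unfolding noise_prob_def by (intro prod_nonneg) auto

lemma success_bounds:
  assumes "K \<ge> 1" "0 < q" "q < 1"
  shows "success_prob N K T q dec \<le> 2 ^ T / real (N choose K)" "success_prob N K T q dec \<ge> 0"
proof -
  let ?c = "1 / real (N choose K)"
  let ?DS = "defective_sets N K"
  let ?g = "\<lambda>X W. card {S \<in> ?DS. dec X (outcomes T S X W) = S}"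
  have eq: "success_prob N K T q dec =
     (\<Sum>X\<in>designs N T. \<Sum>W\<in>noises T. ?c * design_prob N K T X * noise_prob T q W * real (?g X W))"
  proof -
    have "success_prob N K T q dec = (\<Sum>X\<in>designs N T. \<Sum>W\<in>noises T. \<Sum>S\<in>?DS.
        ?c * design_prob N K T X * noise_prob T q W * (if dec X (outcomes T S X W) = S then 1 else 0))"
      unfolding success_prob_def
      by (subst sum.swap) (simp add: sum.swap[of _ ?DS "noises T"])
    also have "\<dots> = (\<Sum>X\<in>designs N T. \<Sum>W\<in>noises T. ?c * design_prob N K T X * noise_prob T q W * real (?g X W))"
    proof (intro sum.cong refl)
      fix X W
      have "(\<Sum>S\<in>?DS. ?c * design_prob N K T X * noise_prob T q W * (if dec X (outcomes T S X W) = S then 1 else 0))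
         = ?c * design_prob N K T X * noise_prob T q W * (\<Sum>S\<in>?DS. (if dec X (outcomes T S X W) = S then 1 else 0))"
        by (simp add: sum_distrib_left)
      also have "(\<Sum>S\<in>?DS. (if dec X (outcomes T S X W) = S then 1 else 0::real)) = real (?g X W)"
        using ds_finite[of N K] by (simp add: sum.If_cases Int_def conj_commute)
      finally show "(\<Sum>S\<in>?DS. ?c * design_prob N K T X * noise_prob T q W * (if dec X (outcomes T S X W) = S then 1 else 0))
         = ?c * design_prob N K T X * noise_prob T q W * real (?g X W)" .
    qed
    finally show ?thesis .
  qed
  have "success_prob N K T q dec \<le> (\<Sum>X\<in>designs N T. \<Sum>W\<in>noises T. ?c * design_prob N K T X * noise_prob T q W * 2 ^ T)"
    unfolding eq
  proof (intro sum_mono)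
    fix X W
    have "real (?g X W) \<le> real (2 ^ T)" using card_good[of N K dec X T W] by (simp only: of_nat_le_iff)
    then have "real (?g X W) \<le> 2 ^ T" by simp
    then show "?c * design_prob N K T X * noise_prob T q W * real (?g X W) \<le> ?c * design_prob N K T X * noise_prob T q W * 2 ^ T"
      using dp_nonneg[OF assms(1)] np_nonneg[OF assms(2,3)] by (intro mult_left_mono) auto
  qed
  also have "\<dots> = ?c * 2 ^ T * (\<Sum>X\<in>designs N T. design_prob N K T X) * (\<Sum>W\<in>noises T. noise_prob T q W)"
  proof -
    have h: "\<And>X W. ?c * design_prob N K T X * noise_prob T q W * 2 ^ T = (?c * 2 ^ T * design_prob N K T X) * noise_prob T q W"
      by (simp add: algebra_simps)
    have "(\<Sum>X\<in>designs N T. \<Sum>W\<in>noises T. ?c * design_prob N K T X * noise_prob T q W * 2 ^ T)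
       = (\<Sum>X\<in>designs N T. (?c * 2 ^ T * design_prob N K T X) * (\<Sum>W\<in>noises T. noise_prob T q W))"
      by (simp only: h sum_distrib_left)
    also have "\<dots> = (\<Sum>X\<in>designs N T. (?c * 2 ^ T * design_prob N K T X)) * (\<Sum>W\<in>noises T. noise_prob T q W)"
      by (simp add: sum_distrib_right)
    also have "\<dots> = ?c * 2 ^ T * (\<Sum>X\<in>designs N T. design_prob N K T X) * (\<Sum>W\<in>noises T. noise_prob T q W)"
      by (simp add: sum_distrib_left)
    finally show ?thesis .
  qed
  also have "\<dots> = 2 ^ T / real (N choose K)" using design_sum noise_sum[OF assms(2,3)] by simp
  finally show "success_prob N K T q dec \<le> 2 ^ T / real (N choose K)" .
  show "success_prob N K T q dec \<ge> 0" unfolding eq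
    using dp_nonneg[OF assms(1)] np_nonneg[OF assms(2,3)] by (intro sum_nonneg mult_nonneg_nonneg) auto
qed

lemma pw:
  fixes N K T :: nat
  assumes K: "1 \<le> K" and NK: "3 * K \<le> N"
    and TT: "real T * ln 2 \<le> real K * ln (real N / real K) / 2"
  shows "2 ^ T / real (N choose K) \<le> exp (- real K / 2)"
proof -
  let ?r = "real N / real K"
  have Kp: "real K > 0" using K by simp
  have r3: "?r \<ge> 3" using NK Kp by (simp add: field_simps)
  have lnr: "ln ?r \<ge> 1"
  proof -
    have "exp 1 \<le> (3::real)" using exp_le by linarith
    then have "exp 1 \<le> ?r" using r3 by linarith
    moreover have "ln (exp 1) \<le> ln ?r \<longleftrightarrow> exp 1 \<le> ?r" using r3 by (intro ln_le_cancel_iff) auto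
    ultimately show ?thesis by simp
  qed
  define a where "a = real K * ln ?r"
  have aK: "a \<ge> real K" unfolding a_def using mult_left_mono[OF lnr, of "real K"] by simp
  have rpos: "?r > 0" using r3 by simp
  have B: "?r ^ K \<le> real (N choose K)"
    by (rule binomial_ge_n_over_k_pow_k) (use NK in linarith)
  have "exp a = exp (ln ?r) ^ K" unfolding a_def by (rule exp_of_nat_mult)
  also have "\<dots> = ?r ^ K" by (simp only: exp_ln[OF rpos])
  finally have C: "exp a \<le> real (N choose K)" using B by linarith
  have "exp (real T * ln 2) = exp (ln 2) ^ T" by (rule exp_of_nat_mult)
  also have "\<dots> = (2::real) ^ T" by simp
  finally have e2: "(2::real) ^ T = exp (real T * ln 2)" by simp
  have ea: "exp a > 0" by simp
  have Cp: "real (N choose K) > 0" using C ea by linarith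
  have "2 ^ T / real (N choose K) \<le> 2 ^ T / exp a"
    by (rule divide_left_mono[OF C]) (simp, rule mult_pos_pos[OF Cp ea])
  also have "\<dots> = exp (real T * ln 2) / exp a" using e2 by simp
  also have "\<dots> = exp (real T * ln 2 - a)" by (simp add: exp_diff)
  also have "\<dots> \<le> exp (- real K / 2)"
  proof -
    have "real T * ln 2 \<le> a / 2" using TT unfolding a_def .
    then have "real T * ln 2 - a \<le> - real K / 2" using aK by linarith
    then show ?thesis by simp
  qed
  finally show ?thesis .
qed

theorem theorem8:
  fixes N K T :: "nat \<Rightarrow> nat" and q :: real
    and dec :: "nat \<Rightarrow> design \<Rightarrow> outcome \<Rightarrow> nat set"
  assumes "0 < q" "q < 1"
    and "filterlim N at_top sequentially"
    and "filterlim K at_top sequentially"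
    and "(\<lambda>n. real (K n) / real (N n)) \<longlonglongrightarrow> 0"
    and "(\<lambda>n. real (T n)) \<in>
           o(\<lambda>n. real (K n) * ln (real (N n) / real (K n)) / (2 * (1 - q) + ln (1 / q)))"
  shows "(\<lambda>n. error_prob (N n) (K n) (T n) q (dec n)) \<longlonglongrightarrow> 1"
proof -
  define c where "c = 2 * (1 - q) + ln (1 / q)"
  have cpos: "c > 0" proof -
    have "ln q < 0" using assms(1,2) by simp
    moreover have "c = 2 * (1 - q) - ln q" unfolding c_def using assms(1) by (simp add: ln_div)
    ultimately show ?thesis using assms(2) by (smt (verit))
  qed
  have ln2: "ln (2::real) > 0" by simp
  define a where "a = (\<lambda>n. real (K n) * ln (real (N n) / real (K n)))"
  have ev1: "eventually (\<lambda>n. K n \<ge> 1) sequentially"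
    using assms(4) by (simp add: filterlim_at_top)
  have ev2: "eventually (\<lambda>n. real (K n) / real (N n) < 1/3) sequentially"
    using assms(5) by (rule order_tendstoD) simp
  have ev4: "eventually (\<lambda>n. N n \<ge> 1) sequentially"
    using assms(3) by (simp add: filterlim_at_top)
  have ev3: "eventually (\<lambda>n. norm (real (T n)) \<le> (c / (2 * ln 2)) * norm (a n / c)) sequentially"
    using landau_o.smallD[OF assms(6)[folded c_def], of "c / (2 * ln 2)"] cpos ln2
    unfolding a_def by simp
  have bound: "eventually (\<lambda>n. 1 - exp (- real (K n) / 2) \<le> error_prob (N n) (K n) (T n) q (dec n)
       \<and> error_prob (N n) (K n) (T n) q (dec n) \<le> 1) sequentially"
    using ev1 ev2 ev3 ev4
  proof eventually_elim
    case (elim n)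
    have Kp: "real (K n) > 0" using elim(1) by simp
    have NK: "3 * K n \<le> N n"
    proof -
      have "real (N n) > 0"
      proof (rule ccontr)
        assume "\<not> real (N n) > 0" then have "N n = 0" by simp
        then show False using elim(4) by simp
      qed
      then have "3 * real (K n) < real (N n)" using elim(2) by (simp add: field_simps)
      then show ?thesis by linarith
    qed
    have r3: "real (N n) / real (K n) \<ge> 3" using NK Kp by (simp add: field_simps)
    have "ln (real (N n) / real (K n)) \<ge> 0" using r3 by simp
    then have "a n \<ge> 0" unfolding a_def using Kp by simp
    then have "real (T n) \<le> (c / (2 * ln 2)) * (a n / c)" using elim(3) cpos by simp
    also have "\<dots> = a n / (2 * ln 2)" using cpos by simp
    finally have "real (T n) * ln 2 \<le> a n / 2" using ln2 by (simp add: field_simps)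
    then have P: "2 ^ T n / real (N n choose K n) \<le> exp (- real (K n) / 2)"
      using pw[OF elim(1) NK] unfolding a_def by simp
    have S: "success_prob (N n) (K n) (T n) q (dec n) \<le> 2 ^ T n / real (N n choose K n)"
         "success_prob (N n) (K n) (T n) q (dec n) \<ge> 0"
      using success_bounds[OF elim(1) assms(1,2)] by auto
    show ?case unfolding error_prob_def using S P by linarith
  qed
  have Kr: "filterlim (\<lambda>n. real (K n)) at_top sequentially"
    using filterlim_compose[OF filterlim_real_sequentially assms(4)] by simp
  have "filterlim (\<lambda>n. - real (K n) / 2) at_bot sequentially"
    using filterlim_tendsto_neg_mult_at_bot[OF tendsto_const[of "-1/2"] _ Kr] by (simp add: field_simps)
  then have "(\<lambda>n. exp (- real (K n) / 2)) \<longlonglongrightarrow> 0"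
    using filterlim_compose[OF exp_at_bot] by blast
  then have lo: "(\<lambda>n. 1 - exp (- real (K n) / 2)) \<longlonglongrightarrow> 1"
    using tendsto_diff[OF tendsto_const[of 1]] by fastforce
  show ?thesis
    by (rule tendsto_sandwich[OF _ _ lo tendsto_const[of 1]]) (use bound in \<open>auto elim: eventually_mono\<close>)
qed

end
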